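(* Let $n\ge 2$ be an integer and $A\subseteq L_n$. The subspace $(L_n,\tau(A)|_{L_n})$ of $(X_n,\tau(A))$ is perfect if and only if $A$ is a $G_\delta$-set in $(L_n,\tau_E|_{L_n})$.
   Context: For $\overline{x},\overline{a}\in\mathbb R^n$ let $|\overline{x}-\overline{a}|$ be the Euclidean distance and $B(\overline{a},\epsilon)=\{\overline{x}\in\mathbb R^n:|\overline{x}-\overline{a}|<\epsilon\}$. Let $P_n=\{\overline{x}\in\mathbb R^n: x_n>0\}$, $L_n=\{\overline{x}\in\mathbb R^n: x_n=0\}$, $X_n=P_n\cup L_n$, and let $\tau_E$ denote the Euclidean topology on $X_n$. For $\overline{a}\in L_n$ and $\epsilon>0$ put $\overline{a(\epsilon)}=(a_1,\dots,a_{n-1},\epsilon)$ and $\tilde B(\overline{a},\epsilon)=\{\overline{a}\}\cup B(\overline{a(\epsilon)},\epsilon)$. For $A\subseteq L_n$, the topology $\tau(A)$ on $X_n$ is generated by the local bases: at $\overline{a}\in P_n$, the sets $B(\overline{a},\epsilon)$ with $0<\epsilon<a_n$; at $\overline{a}\in A$, the sets $B(\overline{a},\epsilon)\cap X_n$ with $\epsilon>0$; at $\overline{a}\in L_n\setminus A$, the sets $\tilde B(\overline{a},\epsilon)$ with $\epsilon>0$. (Equivalently, $\tau(A)|_{L_n}$ is the topology on $L_n$ whose open sets are the sets $U\cup D$ with $U$ Euclidean-open in $L_n$ and $D\subseteq L_n\setminus A$.) A space is perfect if every closed set is a $G_\delta$-set. *)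

theory Defs
  imports "HOL-Analysis.Analysis"
begin

text \<open>Points of R^n are vectors of type real^'n; the distinguished coordinate k plays
  the role of the n-th (last) coordinate x_n.\<close>

definition Pn :: "'n::finite \<Rightarrow> (real^'n) set" where
  "Pn k = {x. x $ k > 0}"

definition Ln :: "'n::finite \<Rightarrow> (real^'n) set" where
  "Ln k = {x. x $ k = 0}"

definition Xn :: "'n::finite \<Rightarrow> (real^'n) set" where
  "Xn k = Pn k \<union> Ln k"

definition lift_pt :: "'n::finite \<Rightarrow> real^'n \<Rightarrow> real \<Rightarrow> real^'n" where
  "lift_pt k a e = (\<chi> i. if i = k then e else a $ i)"

definition tildeB :: "'n::finite \<Rightarrow> real^'n \<Rightarrow> real \<Rightarrow> (real^'n) set" where
  "tildeB k a e = insert a (ball (lift_pt k a e) e)"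

definition tauA :: "'n::finite \<Rightarrow> (real^'n) set \<Rightarrow> (real^'n) topology" where
  "tauA k A = topology (\<lambda>U. U \<subseteq> Xn k \<and>
     (\<forall>a\<in>U.
        (a \<in> Pn k \<longrightarrow> (\<exists>e. 0 < e \<and> e < a $ k \<and> ball a e \<subseteq> U)) \<and>
        (a \<in> A \<longrightarrow> (\<exists>e>0. ball a e \<inter> Xn k \<subseteq> U)) \<and>
        (a \<in> Ln k - A \<longrightarrow> (\<exists>e>0. tildeB k a e \<subseteq> U))))"

definition perfect_top :: "'a topology \<Rightarrow> bool" where
  "perfect_top T \<longleftrightarrow> (\<forall>C. closedin T C \<longrightarrow> gdelta_in T C)"

end

theory Submission
  imports Defs
begin

lemma lift_diff: "dist (lift_pt k a e2) (lift_pt k a e1) = \<bar>e2 - e1\<bar>"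
proof -
  have "lift_pt k a e2 - lift_pt k a e1 = axis k (e2 - e1)"
    by (simp add: vec_eq_iff lift_pt_def axis_def)
  moreover have "norm (axis k (e2 - e1)) = \<bar>e2 - e1\<bar>"
  proof -
    have eq: "axis k (e2 - e1) = (e2 - e1) *\<^sub>R axis k (1::real)"
      by (simp add: vec_eq_iff axis_def)
    show ?thesis unfolding eq by (simp only: norm_scaleR norm_axis_1 real_norm_def mult_1_right)
  qed
  ultimately show ?thesis by (simp add: dist_norm)
qed

lemma tildeB_mono:
  assumes "e1 \<le> e2" shows "tildeB k a e1 \<subseteq> tildeB k a e2"
proof
  fix x assume "x \<in> tildeB k a e1"
  then consider "x = a" | "dist (lift_pt k a e1) x < e1" by (auto simp: tildeB_def)
  then show "x \<in> tildeB k a e2"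
  proof cases
    case 2
    have "dist (lift_pt k a e2) x \<le> dist (lift_pt k a e2) (lift_pt k a e1) + dist (lift_pt k a e1) x"
      by (rule dist_triangle)
    also have "\<dots> < e2" using 2 assms by (simp add: lift_diff)
    finally show ?thesis by (simp add: tildeB_def)
  qed (simp add: tildeB_def)
qed

lemma ball_lift_Pn: "ball (lift_pt k a e) e \<subseteq> Pn k"
proof
  fix x assume "x \<in> ball (lift_pt k a e) e"
  then have "norm (lift_pt k a e - x) < e" by (simp add: dist_norm)
  moreover have "\<bar>(lift_pt k a e - x) $ k\<bar> \<le> norm (lift_pt k a e - x)"
    by (rule component_le_norm_cart)
  ultimately have "\<bar>e - x $ k\<bar> < e" by (simp add: lift_pt_def)
  then show "x \<in> Pn k" by (simp add: Pn_def)
qed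

lemma Pn_ball: "x \<in> Pn k \<Longrightarrow> ball x (x $ k / 2) \<subseteq> Pn k"
proof
  fix y assume x: "x \<in> Pn k" and "y \<in> ball x (x $ k / 2)"
  then have "norm (x - y) < x $ k / 2" by (simp add: dist_norm)
  moreover have "\<bar>(x - y) $ k\<bar> \<le> norm (x - y)"
    by (rule component_le_norm_cart)
  ultimately show "y \<in> Pn k" using x by (simp add: Pn_def)
qed

lemma PL_disj: "Pn k \<inter> Ln k = {}" by (auto simp: Pn_def Ln_def)

definition tpred :: "'n::finite \<Rightarrow> (real^'n) set \<Rightarrow> (real^'n) set \<Rightarrow> bool" where
  "tpred k A = (\<lambda>U. U \<subseteq> Xn k \<and>
     (\<forall>a\<in>U.
        (a \<in> Pn k \<longrightarrow> (\<exists>e. 0 < e \<and> e < a $ k \<and> ball a e \<subseteq> U)) \<and>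
        (a \<in> A \<longrightarrow> (\<exists>e>0. ball a e \<inter> Xn k \<subseteq> U)) \<and>
        (a \<in> Ln k - A \<longrightarrow> (\<exists>e>0. tildeB k a e \<subseteq> U))))"

lemma tpredD1: "tpred k A U \<Longrightarrow> U \<subseteq> Xn k"
  unfolding tpred_def by (elim conjE)

lemma tpredD2: "tpred k A U \<Longrightarrow> a \<in> U \<Longrightarrow> a \<in> Pn k \<Longrightarrow> \<exists>e>0. e < a $ k \<and> ball a e \<subseteq> U"
  unfolding tpred_def by (elim conjE, drule bspec, assumption, elim conjE, erule mp)

lemma tpredD3: "tpred k A U \<Longrightarrow> a \<in> U \<Longrightarrow> a \<in> A \<Longrightarrow> \<exists>e>0. ball a e \<inter> Xn k \<subseteq> U"
  unfolding tpred_def by (elim conjE, drule bspec, assumption, elim conjE, erule mp)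

lemma tpredD4: "tpred k A U \<Longrightarrow> a \<in> U \<Longrightarrow> a \<in> Ln k - A \<Longrightarrow> \<exists>e>0. tildeB k a e \<subseteq> U"
  unfolding tpred_def by (elim conjE, drule bspec, assumption, elim conjE, erule mp)

lemma tpredI:
  assumes "U \<subseteq> Xn k"
    and "\<And>a. a \<in> U \<Longrightarrow> a \<in> Pn k \<Longrightarrow> \<exists>e>0. e < a $ k \<and> ball a e \<subseteq> U"
    and "\<And>a. a \<in> U \<Longrightarrow> a \<in> A \<Longrightarrow> \<exists>e>0. ball a e \<inter> Xn k \<subseteq> U"
    and "\<And>a. a \<in> U \<Longrightarrow> a \<in> Ln k - A \<Longrightarrow> \<exists>e>0. tildeB k a e \<subseteq> U"
  shows "tpred k A U"
  unfolding tpred_def using assms by simp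

lemma istop: "istopology (tpred k A)"
  unfolding istopology_def
proof (intro conjI allI impI)
  fix S T assume S: "tpred k A S" and T: "tpred k A T"
  show "tpred k A (S \<inter> T)"
  proof (rule tpredI)
    show "S \<inter> T \<subseteq> Xn k" using tpredD1[OF S] by blast
  next
    fix a assume a: "a \<in> S \<inter> T" "a \<in> Pn k"
    obtain e1 where "0 < e1" "e1 < a $ k" "ball a e1 \<subseteq> S"
      using tpredD2[OF S _ a(2)] a(1) by blast
    moreover obtain e2 where "0 < e2" "e2 < a $ k" "ball a e2 \<subseteq> T"
      using tpredD2[OF T _ a(2)] a(1) by blast
    ultimately show "\<exists>e>0. e < a $ k \<and> ball a e \<subseteq> S \<inter> T"
      by (intro exI[of _ "min e1 e2"]) auto
  next
    fix a assume a: "a \<in> S \<inter> T" "a \<in> A"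
    obtain e1 where "0 < e1" "ball a e1 \<inter> Xn k \<subseteq> S"
      using tpredD3[OF S _ a(2)] a(1) by blast
    moreover obtain e2 where "0 < e2" "ball a e2 \<inter> Xn k \<subseteq> T"
      using tpredD3[OF T _ a(2)] a(1) by blast
    ultimately show "\<exists>e>0. ball a e \<inter> Xn k \<subseteq> S \<inter> T"
      by (intro exI[of _ "min e1 e2"]) auto
  next
    fix a assume a: "a \<in> S \<inter> T" "a \<in> Ln k - A"
    obtain e1 where e1: "0 < e1" "tildeB k a e1 \<subseteq> S"
      using tpredD4[OF S _ a(2)] a(1) by blast
    moreover obtain e2 where e2: "0 < e2" "tildeB k a e2 \<subseteq> T"
      using tpredD4[OF T _ a(2)] a(1) by blast
    moreover have "tildeB k a (min e1 e2) \<subseteq> tildeB k a e1" "tildeB k a (min e1 e2) \<subseteq> tildeB k a e2"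
      by (rule tildeB_mono, simp)+
    ultimately have "tildeB k a (min e1 e2) \<subseteq> S \<inter> T" by blast
    then show "\<exists>e>0. tildeB k a e \<subseteq> S \<inter> T"
      using e1 e2 by (intro exI[of _ "min e1 e2"]) simp
  qed
next
  fix K assume K: "\<forall>S\<in>K. tpred k A S"
  show "tpred k A (\<Union>K)"
  proof (rule tpredI)
    show "\<Union>K \<subseteq> Xn k" using K tpredD1 by blast
  next
    fix a assume a: "a \<in> \<Union>K" "a \<in> Pn k"
    then obtain S where S: "S \<in> K" "a \<in> S" by blast
    then obtain e where "0 < e" "e < a $ k" "ball a e \<subseteq> S" using tpredD2[OF _ S(2) a(2)] K by blast
    then show "\<exists>e>0. e < a $ k \<and> ball a e \<subseteq> \<Union>K" using S by blast
  next
    fix a assume a: "a \<in> \<Union>K" "a \<in> A"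
    then obtain S where S: "S \<in> K" "a \<in> S" by blast
    then obtain e where "0 < e" "ball a e \<inter> Xn k \<subseteq> S" using tpredD3[OF _ S(2) a(2)] K by blast
    then show "\<exists>e>0. ball a e \<inter> Xn k \<subseteq> \<Union>K" using S by blast
  next
    fix a assume a: "a \<in> \<Union>K" "a \<in> Ln k - A"
    then obtain S where S: "S \<in> K" "a \<in> S" by blast
    then obtain e where "0 < e" "tildeB k a e \<subseteq> S" using tpredD4[OF _ S(2) a(2)] K by blast
    then show "\<exists>e>0. tildeB k a e \<subseteq> \<Union>K" using S by blast
  qed
qed

lemma openin_tauA: "openin (tauA k A) U \<longleftrightarrow> tpred k A U"
  using istop[of k A] unfolding tauA_def tpred_def[symmetric] by simp

lemma openT:
  assumes AL: "A \<subseteq> Ln k"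
  shows "openin (subtopology (tauA k A) (Ln k)) W \<longleftrightarrow>
     W \<subseteq> Ln k \<and> (\<forall>a\<in>W \<inter> A. \<exists>e>0. \<forall>y\<in>Ln k. dist y a < e \<longrightarrow> y \<in> W)"
proof
  assume "openin (subtopology (tauA k A) (Ln k)) W"
  then obtain V where V: "tpred k A V" and W: "W = V \<inter> Ln k"
    by (auto simp: openin_subtopology openin_tauA)
  show "W \<subseteq> Ln k \<and> (\<forall>a\<in>W \<inter> A. \<exists>e>0. \<forall>y\<in>Ln k. dist y a < e \<longrightarrow> y \<in> W)"
  proof (intro conjI ballI)
    show "W \<subseteq> Ln k" using W by blast
  next
    fix a assume a: "a \<in> W \<inter> A"
    then obtain e where e: "0 < e" "ball a e \<inter> Xn k \<subseteq> V"
      using tpredD3[OF V, of a] W by blast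
    show "\<exists>e>0. \<forall>y\<in>Ln k. dist y a < e \<longrightarrow> y \<in> W"
    proof (intro exI[of _ e] conjI ballI impI)
      fix y assume "y \<in> Ln k" "dist y a < e"
      then have "y \<in> ball a e \<inter> Xn k" by (simp add: dist_commute Xn_def)
      then show "y \<in> W" using e \<open>y \<in> Ln k\<close> W by blast
    qed (use e in auto)
  qed
next
  assume R: "W \<subseteq> Ln k \<and> (\<forall>a\<in>W \<inter> A. \<exists>e>0. \<forall>y\<in>Ln k. dist y a < e \<longrightarrow> y \<in> W)"
  have V: "tpred k A (W \<union> Pn k)"
  proof (rule tpredI)
    show "W \<union> Pn k \<subseteq> Xn k" using R by (auto simp: Xn_def)
  next
    fix a assume a: "a \<in> W \<union> Pn k" "a \<in> Pn k"
    have "0 < a $ k" using a by (simp add: Pn_def)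
    then show "\<exists>e>0. e < a $ k \<and> ball a e \<subseteq> W \<union> Pn k"
      using Pn_ball[OF a(2)] by (intro exI[of _ "a $ k / 2"]) auto
  next
    fix a assume a: "a \<in> W \<union> Pn k" "a \<in> A"
    then have "a \<in> W" using AL PL_disj by blast
    then obtain e where e: "0 < e" "\<forall>y\<in>Ln k. dist y a < e \<longrightarrow> y \<in> W" using R a by blast
    have "ball a e \<inter> Xn k \<subseteq> W \<union> Pn k"
    proof
      fix y assume "y \<in> ball a e \<inter> Xn k"
      then show "y \<in> W \<union> Pn k" using e by (auto simp: Xn_def dist_commute)
    qed
    then show "\<exists>e>0. ball a e \<inter> Xn k \<subseteq> W \<union> Pn k" using e by blast
  next
    fix a assume a: "a \<in> W \<union> Pn k" "a \<in> Ln k - A"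
    have "tildeB k a 1 \<subseteq> W \<union> Pn k"
      using ball_lift_Pn[of k a 1] a by (auto simp: tildeB_def)
    then show "\<exists>e>0. tildeB k a e \<subseteq> W \<union> Pn k" by (intro exI[of _ 1]) simp
  qed
  have "W = (W \<union> Pn k) \<inter> Ln k" using R PL_disj by blast
  then show "openin (subtopology (tauA k A) (Ln k)) W"
    using V by (auto simp: openin_subtopology openin_tauA)
qed

lemma topT:
  assumes AL: "A \<subseteq> Ln k"
  shows "topspace (subtopology (tauA k A) (Ln k)) = Ln k"
proof -
  have "openin (subtopology (tauA k A) (Ln k)) (Ln k)"
    unfolding openT[OF AL] using zero_less_one by blast
  then have "Ln k \<subseteq> topspace (subtopology (tauA k A) (Ln k))" by (rule openin_subset)
  moreover have "topspace (subtopology (tauA k A) (Ln k)) \<subseteq> Ln k" by simp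
  ultimately show ?thesis by blast
qed

lemma E_open_T:
  assumes AL: "A \<subseteq> Ln k" and "openin (top_of_set (Ln k)) W"
  shows "openin (subtopology (tauA k A) (Ln k)) W"
proof -
  have W: "W \<subseteq> Ln k" "\<And>x. x \<in> W \<Longrightarrow> \<exists>e>0. \<forall>x'\<in>Ln k. dist x' x < e \<longrightarrow> x' \<in> W"
    using assms(2) unfolding openin_euclidean_subtopology_iff by blast+
  show ?thesis unfolding openT[OF AL] using W by simp
qed

lemma gdelta_E_T:
  assumes AL: "A \<subseteq> Ln k" and "gdelta_in (top_of_set (Ln k)) S"
  shows "gdelta_in (subtopology (tauA k A) (Ln k)) S"
proof -
  have "S \<subseteq> Ln k" "(countable intersection_of openin (top_of_set (Ln k))) S"
    using assms(2) by (auto simp: gdelta_in_alt)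
  moreover have "(countable intersection_of openin (subtopology (tauA k A) (Ln k))) S"
    using \<open>(countable intersection_of openin (top_of_set (Ln k))) S\<close>
    by (rule intersection_of_mono) (rule E_open_T[OF AL])
  ultimately show ?thesis
    unfolding gdelta_in_alt topT[OF AL] by blast
qed

theorem mainTheorem10:
  fixes A :: "(real^'n) set" and k :: 'n
  assumes "CARD('n) \<ge> 2" and "A \<subseteq> Ln k"
  shows "perfect_top (subtopology (tauA k A) (Ln k))
         \<longleftrightarrow> gdelta_in (subtopology euclidean (Ln k)) A"
proof
  let ?T = "subtopology (tauA k A) (Ln k)"
  let ?E = "top_of_set (Ln k)"
  note AL = assms(2)
  assume P: "perfect_top ?T"
  have "openin ?T (Ln k - A)" unfolding openT[OF AL] by blast
  then have "closedin ?T A" using AL unfolding closedin_def topT[OF AL] by blast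
  then have "gdelta_in ?T A" using P by (simp add: perfect_top_def)
  then obtain G where G: "countable G" "G \<subseteq> Collect (openin ?T)" "\<Inter>G = A"
    by (auto simp: gdelta_in_alt intersection_of_def)
  have sub: "A \<subseteq> ?E interior_of U" if U: "U \<in> G" for U
  proof
    fix a assume a: "a \<in> A"
    have "A \<subseteq> U" using G U by blast
    have "openin ?T U" using G U by blast
    then have "\<forall>a\<in>U \<inter> A. \<exists>e>0. \<forall>y\<in>Ln k. dist y a < e \<longrightarrow> y \<in> U"
      unfolding openT[OF AL] by (elim conjE)
    moreover have "a \<in> U \<inter> A" using a \<open>A \<subseteq> U\<close> by blast
    ultimately obtain e where e: "0 < e" "\<forall>y\<in>Ln k. dist y a < e \<longrightarrow> y \<in> U"
      by blast
    have "Ln k \<inter> ball a e \<subseteq> ?E interior_of U"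
      by (rule interior_of_maximal) (use e in \<open>auto simp: dist_commute\<close>)
    then show "a \<in> ?E interior_of U" using a AL e by auto
  qed
  have "\<Inter>((\<lambda>U. ?E interior_of U) ` G) = A"
  proof
    show "\<Inter>((\<lambda>U. ?E interior_of U) ` G) \<subseteq> A"
    proof
      fix x assume "x \<in> \<Inter>((\<lambda>U. ?E interior_of U) ` G)"
      then have "\<And>U. U \<in> G \<Longrightarrow> x \<in> ?E interior_of U" by simp
      then have "\<And>U. U \<in> G \<Longrightarrow> x \<in> U" using interior_of_subset by fast
      then have "x \<in> \<Inter>G" by simp
      then show "x \<in> A" using G(3) by simp
    qed
    show "A \<subseteq> \<Inter>((\<lambda>U. ?E interior_of U) ` G)" by (rule INF_greatest) (rule sub)
  qed
  then have "(countable intersection_of openin ?E) A"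
    unfolding intersection_of_def using G(1)
    by (intro exI[of _ "(\<lambda>U. ?E interior_of U) ` G"]) auto
  then show "gdelta_in ?E A" using AL by (simp add: gdelta_in_alt)
next
  let ?T = "subtopology (tauA k A) (Ln k)"
  let ?E = "top_of_set (Ln k)"
  note AL = assms(2)
  assume GA: "gdelta_in ?E A"
  show "perfect_top ?T"
    unfolding perfect_top_def
  proof (intro allI impI)
    fix C assume C: "closedin ?T C"
    then have CL: "C \<subseteq> Ln k" and O: "openin ?T (Ln k - C)"
      unfolding closedin_def topT[OF AL] by blast+
    define Cb where "Cb = ?E closure_of C"
    have "metrizable_space ?E"
      by (simp add: metrizable_space_subtopology metrizable_space_euclidean)
    then have "gdelta_in ?E Cb" unfolding Cb_def
      by (intro closed_imp_gdelta_in) simp_all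
    then have g1: "gdelta_in ?T (Cb \<inter> A)"
      using GA by (intro gdelta_E_T[OF AL] gdelta_in_Int)
    have "openin ?T (C - A)" unfolding openT[OF AL] using CL by blast
    then have g2: "gdelta_in ?T (C - A)" by (rule open_imp_gdelta_in)
    have "C \<subseteq> Cb" unfolding Cb_def using CL by (intro closure_of_subset) simp
    moreover have "Cb \<inter> A \<subseteq> C"
    proof
      fix a assume a: "a \<in> Cb \<inter> A"
      show "a \<in> C"
      proof (rule ccontr)
        assume "a \<notin> C"
        have aL: "a \<in> Ln k" using a AL by blast
        have "\<forall>a\<in>(Ln k - C) \<inter> A. \<exists>e>0. \<forall>y\<in>Ln k. dist y a < e \<longrightarrow> y \<in> Ln k - C"
          using O unfolding openT[OF AL] by (elim conjE)
        moreover have "a \<in> (Ln k - C) \<inter> A" using aL a \<open>a \<notin> C\<close> by blast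
        ultimately obtain e where e: "0 < e" "\<forall>y\<in>Ln k. dist y a < e \<longrightarrow> y \<in> Ln k - C"
          by blast
        have "openin ?E (Ln k \<inter> ball a e)" by auto
        moreover have "a \<in> Ln k \<inter> ball a e" using aL e by auto
        moreover have "a \<in> ?E closure_of C" using a Cb_def by simp
        then have "\<forall>T. a \<in> T \<and> openin ?E T \<longrightarrow> (\<exists>y. y \<in> C \<and> y \<in> T)"
          unfolding in_closure_of by (elim conjE)
        ultimately obtain y where "y \<in> C" "y \<in> Ln k \<inter> ball a e"
          by blast
        then show False using e by (auto simp: dist_commute)
      qed
    qed
    ultimately have "C = (Cb \<inter> A) \<union> (C - A)" by blast
    then show "gdelta_in ?T C" using g1 g2 by (metis gdelta_in_Un)
  qed
qed

end
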